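(* Let $C$ be a cycle on vertices $0,1,\dots,n-1$ (in clockwise order), let $\mathcal H$ be a family of at least three pairwise distinct runs of $C$ that is strict-containment free, and let $\mathcal K$ be a family of vertex subsets of $C$ such that $(C,\mathcal H)$ and $(C,\mathcal K)$ are $axax$-free. Let $C(\mathcal H)$ be the cycle on $\mathcal H$ in lex. cyclic order. Then there is an outerplanar graph $Q$ on vertex set $\mathcal H$ that contains $C(\mathcal H)$, has an outerplanar embedding whose outer face is bounded by $C(\mathcal H)$, and such that for every $K\in\mathcal K$ the set $\{H\in\mathcal H: H\cap K\ne\emptyset\}$ induces a connected subgraph of $Q$.
   Context: Indices are taken mod $n$. A run is a vertex set of the form $\mathrm{arc}[i,j]=\{i,i+1,\dots,j\}$ (consecutive vertices in clockwise order) that is a nonempty proper subset of $V(C)$; for such a run $R$ write $s(R)=i$, $t(R)=j$. A run $R$ is strictly contained in a run $R'$ if $R\subseteq R'$ and, traversing $C$ clockwise starting from $s(R')$, one meets $s(R')$ strictly before $s(R)$ and $t(R)$ strictly before $t(R')$ (i.e. $R'$ extends beyond $R$ at both ends). A family of runs is strict-containment free if no member is strictly contained in another. Lex. cyclic order: traverse $C$ clockwise from some fixed starting vertex; on visiting a vertex $v$, list all $R\in\mathcal H$ with $s(R)=v$, ordered by increasing clockwise distance from $v$ to $t(R)$ (ties broken arbitrarily); $C(\mathcal H)$ is the cycle through the members of $\mathcal H$ in this order. "Vertices $p_1,\dots,p_4$ in cyclic order" means four distinct vertices met in this order when traversing $C$. A pair $H,H'$ of a family is an $axax$-pair if there are vertices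 $a_1,x_1,a_2,x_2$ in cyclic order with $a_1,a_2\in H\setminus H'$ and $x_1,x_2\in H'$; a family is $axax$-free if it has no $axax$-pair. *)

theory Defs
  imports Main
begin

text \<open>The cycle C has vertices 0,...,n-1 in clockwise order; successor of v is (v+1) mod n.\<close>

definition cdist :: "nat \<Rightarrow> nat \<Rightarrow> nat \<Rightarrow> nat" where
  "cdist n a b = (b + n - a) mod n"

definition arc :: "nat \<Rightarrow> nat \<Rightarrow> nat \<Rightarrow> nat set" where
  "arc n i j = {v. v < n \<and> cdist n i v \<le> cdist n i j}"

definition is_run :: "nat \<Rightarrow> nat set \<Rightarrow> bool" where
  "is_run n R \<longleftrightarrow> (\<exists>i<n. \<exists>j<n. R = arc n i j) \<and> R \<noteq> {} \<and> R \<noteq> {0..<n}"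

definition run_s :: "nat \<Rightarrow> nat set \<Rightarrow> nat" where
  "run_s n R = (THE i. i < n \<and> (\<exists>j<n. R = arc n i j))"

definition run_t :: "nat \<Rightarrow> nat set \<Rightarrow> nat" where
  "run_t n R = (THE j. j < n \<and> (\<exists>i<n. R = arc n i j))"

definition strictly_contained :: "nat \<Rightarrow> nat set \<Rightarrow> nat set \<Rightarrow> bool" where
  "strictly_contained n R R' \<longleftrightarrow> R \<subseteq> R' \<and>
     0 < cdist n (run_s n R') (run_s n R) \<and>
     cdist n (run_s n R') (run_t n R) < cdist n (run_s n R') (run_t n R')"

definition strict_containment_free :: "nat \<Rightarrow> nat set set \<Rightarrow> bool" where
  "strict_containment_free n F \<longleftrightarrow>
     (\<forall>R\<in>F. \<forall>R'\<in>F. \<not> strictly_contained n R R')"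

definition in_cyclic_order :: "nat \<Rightarrow> nat \<Rightarrow> nat \<Rightarrow> nat \<Rightarrow> nat \<Rightarrow> bool" where
  "in_cyclic_order n p1 p2 p3 p4 \<longleftrightarrow> p1 < n \<and> p2 < n \<and> p3 < n \<and> p4 < n \<and>
     0 < cdist n p1 p2 \<and> cdist n p1 p2 < cdist n p1 p3 \<and> cdist n p1 p3 < cdist n p1 p4"

definition axax_pair :: "nat \<Rightarrow> nat set \<Rightarrow> nat set \<Rightarrow> bool" where
  "axax_pair n H H' \<longleftrightarrow> (\<exists>a1 x1 a2 x2. in_cyclic_order n a1 x1 a2 x2 \<and>
     a1 \<in> H - H' \<and> a2 \<in> H - H' \<and> x1 \<in> H' \<and> x2 \<in> H')"

definition axax_free :: "nat \<Rightarrow> nat set set \<Rightarrow> bool" where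
  "axax_free n F \<longleftrightarrow> (\<forall>H\<in>F. \<forall>H'\<in>F. \<not> axax_pair n H H')"

text \<open>Lex. cyclic order, traversing C clockwise from the fixed starting vertex 0:
  R comes before R' iff s(R) < s(R'), or s(R) = s(R') and R ends earlier.\<close>
definition lex_less :: "nat \<Rightarrow> nat set \<Rightarrow> nat set \<Rightarrow> bool" where
  "lex_less n A B \<longleftrightarrow> run_s n A < run_s n B \<or>
     (run_s n A = run_s n B \<and>
      cdist n (run_s n A) (run_t n A) < cdist n (run_s n B) (run_t n B))"

text \<open>Edge set of the cycle C(H): consecutive members in the lex. order, plus the closing edge
  between the last and the first member.\<close>
definition lex_cycle_edges :: "nat \<Rightarrow> nat set set \<Rightarrow> nat set set set" where
  "lex_cycle_edges n H = {{A, B} | A B. A \<in> H \<and> B \<in> H \<and> lex_less n A B \<and>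
      ((\<not> (\<exists>X\<in>H. lex_less n A X \<and> lex_less n X B)) \<or>
       (\<forall>X\<in>H. \<not> lex_less n X A \<and> \<not> lex_less n B X))}"

text \<open>Two edges cross (as chords of the cycle C(H)) iff their endpoints alternate
  in the cyclic order of C(H).\<close>
definition edges_cross :: "nat \<Rightarrow> nat set set \<Rightarrow> nat set set \<Rightarrow> bool" where
  "edges_cross n e f \<longleftrightarrow> (\<exists>A B C D. e = {A, B} \<and> f = {C, D} \<and>
     lex_less n A C \<and> lex_less n C B \<and> lex_less n B D)"

definition simple_graph_on :: "'a set \<Rightarrow> 'a set set \<Rightarrow> bool" where
  "simple_graph_on V E \<longleftrightarrow> (\<forall>e\<in>E. \<exists>u v. u \<in> V \<and> v \<in> V \<and> u \<noteq> v \<and> e = {u, v})"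

definition induces_connected :: "'a set set \<Rightarrow> 'a set \<Rightarrow> bool" where
  "induces_connected E S \<longleftrightarrow>
     (\<forall>u\<in>S. \<forall>v\<in>S. (\<lambda>x y. x \<in> S \<and> y \<in> S \<and> {x, y} \<in> E)\<^sup>*\<^sup>* u v)"

end

theory Submission
  imports Defs
begin

lemma cdist_eq: assumes "a < n" "b < n"
  shows "cdist n a b = (if a \<le> b then b - a else b + n - a)"
proof (cases "a \<le> b")
  case True
  have "b + n - a = (b - a) + n" using True by arith
  then have "(b + n - a) mod n = (b - a) mod n" by (simp only: mod_add_self2)
  also have "\<dots> = b - a" using assms by (intro mod_less) arith
  finally show ?thesis using True unfolding cdist_def by (simp only: if_True)
next
  case False
  then have "b + n - a < n" using assms by arith
  then show ?thesis using False unfolding cdist_def by (simp only: mod_less if_False)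
qed

lemma cdist_mod: assumes "0 < n" "u \<le> w" "w < u + n"
  shows "cdist n (u mod n) (w mod n) = w - u"
proof -
  define a where "a = u mod n"
  define q where "q = u div n"
  define d where "d = w - u"
  have u: "u = q * n + a" unfolding a_def q_def by simp
  have an: "a < n" unfolding a_def using assms(1) by simp
  have dn: "d < n" unfolding d_def using assms by arith
  have w: "w = (a + d) + q * n" unfolding d_def using u assms(2) by arith
  have wm: "w mod n = (a + d) mod n" unfolding w by (simp only: mod_mult_self1)
  have "cdist n a (w mod n) = d"
  proof (cases "a + d < n")
    case True
    then have "w mod n = a + d" using wm by simp
    then show ?thesis using cdist_eq[of a n "a+d"] True an by simp
  next
    case False
    then have e: "a + d = (a + d - n) + n" by arith
    have "(a + d) mod n = (a + d - n) mod n" by (subst e) (simp only: mod_add_self2)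
    also have "\<dots> = a + d - n" using an dn by (intro mod_less) arith
    finally have "w mod n = a + d - n" using wm by simp
    moreover have "a + d - n < a" using False dn by arith
    ultimately show ?thesis using cdist_eq[of a n "a+d-n"] False an dn by simp
  qed
  then show ?thesis unfolding a_def d_def .
qed

lemma cdist_add: "i < m \<Longrightarrow> d < m \<Longrightarrow> cdist m i ((i + d) mod m) = d"
  using cdist_mod[of m i "i+d"] by simp


definition pre :: "nat \<Rightarrow> nat \<Rightarrow> nat" where "pre n x = (if x = 0 then n - 1 else x - 1)"
definition nxt :: "nat \<Rightarrow> nat \<Rightarrow> nat" where "nxt n x = (if x = n - 1 then 0 else x + 1)"

lemma cdist_lt: "a < n \<Longrightarrow> b < n \<Longrightarrow> cdist n a b < n"
  unfolding cdist_def by simp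

lemma pre_lt: "x < n \<Longrightarrow> pre n x < n" unfolding pre_def by auto
lemma nxt_lt: "x < n \<Longrightarrow> nxt n x < n" unfolding nxt_def by auto

lemma cdist_pre_self: "1 < n \<Longrightarrow> i < n \<Longrightarrow> cdist n i (pre n i) = n - 1"
  unfolding pre_def by (simp add: cdist_eq)

lemma cdist_pre: "i < n \<Longrightarrow> x < n \<Longrightarrow> x \<noteq> i \<Longrightarrow> cdist n i (pre n x) = cdist n i x - 1"
  unfolding pre_def by (auto simp add: cdist_eq)

lemma cdist_nxt: "i < n \<Longrightarrow> x < n \<Longrightarrow> cdist n i x < n - 1 \<Longrightarrow> cdist n i (nxt n x) = cdist n i x + 1"
  unfolding nxt_def by (auto simp add: cdist_eq split: if_splits)

lemma cdist_inj: "i < n \<Longrightarrow> x < n \<Longrightarrow> y < n \<Longrightarrow> cdist n i x = cdist n i y \<Longrightarrow> x = y"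
  by (auto simp add: cdist_eq split: if_splits)

lemma cdist_self: "cdist n i i = 0" unfolding cdist_def by simp

lemma arc_proper_len:
  assumes "i < n" "j < n" "arc n i j \<noteq> {0..<n}"
  shows "cdist n i j \<le> n - 2"
proof (rule ccontr)
  assume "\<not> ?thesis"
  then have "\<forall>v<n. cdist n i v \<le> cdist n i j" using cdist_lt[OF assms(1)] by fastforce
  then have "arc n i j = {0..<n}" unfolding arc_def by auto
  then show False using assms(3) by simp
qed

lemma arc_start_char:
  assumes "i < n" "j < n" "arc n i j \<noteq> {0..<n}" "x < n"
  shows "(x \<in> arc n i j \<and> pre n x \<notin> arc n i j) \<longleftrightarrow> x = i"
proof -
  have L: "cdist n i j \<le> n - 2" by (rule arc_proper_len[OF assms(1-3)])
  have n1: "1 < n"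
  proof (rule ccontr)
    assume "\<not> 1 < n"
    then have "n = 1" using assms(1) by simp
    then have "arc n i j = {0..<n}" using assms(1) unfolding arc_def by (auto simp: cdist_self)
    then show False using assms(3) by simp
  qed
  show ?thesis
  proof
    assume h: "x \<in> arc n i j \<and> pre n x \<notin> arc n i j"
    show "x = i"
    proof (rule ccontr)
      assume "x \<noteq> i"
      then have "cdist n i (pre n x) = cdist n i x - 1" using cdist_pre assms by simp
      then have "pre n x \<in> arc n i j" using h pre_lt[OF assms(4)] unfolding arc_def by auto
      then show False using h by simp
    qed
  next
    assume "x = i"
    then show "x \<in> arc n i j \<and> pre n x \<notin> arc n i j"
      using cdist_pre_self[OF n1 assms(1)] L assms(1) n1 unfolding arc_def by (auto simp: cdist_self)
  qed
qed

lemma arc_end_char: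
  assumes "i < n" "j < n" "arc n i j \<noteq> {0..<n}" "x < n"
  shows "(x \<in> arc n i j \<and> nxt n x \<notin> arc n i j) \<longleftrightarrow> x = j"
proof -
  have L: "cdist n i j \<le> n - 2" by (rule arc_proper_len[OF assms(1-3)])
  have n1: "1 < n"
  proof (rule ccontr)
    assume "\<not> 1 < n"
    then have "n = 1" using assms(1) by simp
    then have "arc n i j = {0..<n}" using assms(1) unfolding arc_def by (auto simp: cdist_self)
    then show False using assms(3) by simp
  qed
  show ?thesis
  proof
    assume h: "x \<in> arc n i j \<and> nxt n x \<notin> arc n i j"
    show "x = j"
    proof (rule ccontr)
      assume "x \<noteq> j"
      then have "cdist n i x \<noteq> cdist n i j" using cdist_inj assms by blast
      then have "cdist n i x < cdist n i j" using h unfolding arc_def by auto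
      then have "cdist n i (nxt n x) = cdist n i x + 1" using cdist_nxt assms L by simp
      then have "nxt n x \<in> arc n i j" using h nxt_lt[OF assms(4)] \<open>cdist n i x < cdist n i j\<close> unfolding arc_def by auto
      then show False using h by simp
    qed
  next
    assume "x = j"
    then show "x \<in> arc n i j \<and> nxt n x \<notin> arc n i j"
      using cdist_nxt[OF assms(1) assms(2)] L assms(2) n1 nxt_lt[OF assms(2)] unfolding arc_def by auto
  qed
qed

lemma run_s_arc:
  assumes "i < n" "j < n" "arc n i j \<noteq> {0..<n}"
  shows "run_s n (arc n i j) = i"
  unfolding run_s_def
proof (rule the_equality)
  show "i < n \<and> (\<exists>j'<n. arc n i j = arc n i j')" using assms by auto
next
  fix i' assume h: "i' < n \<and> (\<exists>j'<n. arc n i j = arc n i' j')"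
  then obtain j' where j': "j' < n" "arc n i j = arc n i' j'" by auto
  have "i' \<in> arc n i' j' \<and> pre n i' \<notin> arc n i' j'"
    using arc_start_char[of i' n j' i'] h j' assms(3) by auto
  then show "i' = i" using arc_start_char[OF assms, of i'] h j' by auto
qed

lemma run_t_arc:
  assumes "i < n" "j < n" "arc n i j \<noteq> {0..<n}"
  shows "run_t n (arc n i j) = j"
  unfolding run_t_def
proof (rule the_equality)
  show "j < n \<and> (\<exists>i'<n. arc n i j = arc n i' j)" using assms by auto
next
  fix j' assume h: "j' < n \<and> (\<exists>i'<n. arc n i j = arc n i' j')"
  then obtain i' where i': "i' < n" "arc n i j = arc n i' j'" by auto
  have "j' \<in> arc n i' j' \<and> nxt n j' \<notin> arc n i' j'"
    using arc_end_char[of i' n j' j'] h i' assms(3) by auto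
  then show "j' = j" using arc_end_char[OF assms, of j'] h i' by auto
qed

definition rl :: "nat \<Rightarrow> nat set \<Rightarrow> nat" where
  "rl n R = cdist n (run_s n R) (run_t n R)"

lemma add_cdist_mod: "i < n \<Longrightarrow> j < n \<Longrightarrow> (i + cdist n i j) mod n = j"
proof (cases "i \<le> j")
  case True
  assume "i < n" "j < n"
  then show ?thesis using True by (simp add: cdist_eq)
next
  case False
  assume a: "i < n" "j < n"
  then have "i + cdist n i j = j + n" using False by (simp add: cdist_eq)
  then show ?thesis using a by simp
qed

lemma run_props:
  assumes "is_run n R"
  shows "1 < n" "run_s n R < n" "rl n R \<le> n - 2"
    "R = {v. v < n \<and> cdist n (run_s n R) v \<le> rl n R}"
    "run_t n R = (run_s n R + rl n R) mod n"
proof -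
  obtain i j where ij: "i < n" "j < n" "R = arc n i j" "R \<noteq> {0..<n}"
    using assms unfolding is_run_def by auto
  have s: "run_s n R = i" using run_s_arc ij by simp
  have t: "run_t n R = j" using run_t_arc ij by simp
  have l: "rl n R = cdist n i j" unfolding rl_def s t ..
  show "1 < n"
  proof (rule ccontr)
    assume "\<not> 1 < n"
    then have "n = 1" using ij(1) by simp
    then have "arc n i j = {0..<n}" using ij(1) unfolding arc_def by (auto simp: cdist_self)
    then show False using ij by simp
  qed
  show "run_s n R < n" using s ij by simp
  show "rl n R \<le> n - 2" using l arc_proper_len[of i n j] ij by simp
  show "R = {v. v < n \<and> cdist n (run_s n R) v \<le> rl n R}" using ij s l unfolding arc_def by simp
  show "run_t n R = (run_s n R + rl n R) mod n" using s t l add_cdist_mod ij by simp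
qed

lemma run_mem:
  assumes "is_run n R"
  shows "v \<in> R \<longleftrightarrow> v < n \<and> cdist n (run_s n R) v \<le> rl n R"
  using run_props(4)[OF assms] by blast

lemma lift_in:
  assumes "is_run n X" "run_s n X \<le> u" "u \<le> run_s n X + rl n X"
  shows "u mod n \<in> X"
proof -
  note p = run_props[OF assms(1)]
  have n0: "0 < n" using p(1) by simp
  have "cdist n (run_s n X mod n) (u mod n) = u - run_s n X"
    using cdist_mod[OF n0 assms(2)] assms(3) p(3) p(1) by simp
  then have "cdist n (run_s n X) (u mod n) \<le> rl n X" using p(2) assms(3) by simp
  then show ?thesis using run_mem[OF assms(1)] n0 by simp
qed

lemma mem_lift:
  assumes "is_run n X" "v \<in> X"
  obtains u where "run_s n X \<le> u" "u \<le> run_s n X + rl n X" "u mod n = v"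
proof -
  note p = run_props[OF assms(1)]
  have v: "v < n" "cdist n (run_s n X) v \<le> rl n X" using run_mem[OF assms(1)] assms(2) by auto
  show ?thesis
    using that[of "run_s n X + cdist n (run_s n X) v"] add_cdist_mod[OF p(2) v(1)] v(2) by simp
qed

lemma lex_iff: "lex_less n A B \<longleftrightarrow> run_s n A < run_s n B \<or> (run_s n A = run_s n B \<and> rl n A < rl n B)"
  unfolding lex_less_def rl_def ..

lemma SC1:
  assumes "is_run n Q" "is_run n R" "run_s n Q < run_s n R"
    "run_s n R + rl n R < run_s n Q + rl n Q"
  shows "strictly_contained n R Q"
proof -
  note pQ = run_props[OF assms(1)] and pR = run_props[OF assms(2)]
  have n0: "0 < n" using pQ(1) by simp
  have sub: "R \<subseteq> Q"
  proof
    fix v assume "v \<in> R"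
    then obtain u where u: "run_s n R \<le> u" "u \<le> run_s n R + rl n R" "u mod n = v"
      using mem_lift[OF assms(2)] by blast
    then show "v \<in> Q" using lift_in[OF assms(1), of u] assms(3,4) by simp
  qed
  have c1: "cdist n (run_s n Q) (run_s n R) = run_s n R - run_s n Q"
    using cdist_eq[OF pQ(2) pR(2)] assms(3) by simp
  have "cdist n (run_s n Q mod n) ((run_s n R + rl n R) mod n) = run_s n R + rl n R - run_s n Q"
    using cdist_mod[OF n0, of "run_s n Q" "run_s n R + rl n R"] assms(3,4) pQ(3) pQ(1) by simp
  then have c2: "cdist n (run_s n Q) (run_t n R) = run_s n R + rl n R - run_s n Q"
    using pR(5) pQ(2) by simp
  have c3: "cdist n (run_s n Q) (run_t n Q) = rl n Q" unfolding rl_def ..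
  show ?thesis unfolding strictly_contained_def using sub c1 c2 c3 assms(3,4) by simp
qed

lemma SC2:
  assumes "is_run n P" "is_run n R" "run_s n P \<le> run_s n R"
    "run_s n P + rl n P + n < run_s n R + rl n R"
  shows "strictly_contained n P R"
proof -
  note pP = run_props[OF assms(1)] and pR = run_props[OF assms(2)]
  have n0: "0 < n" using pP(1) by simp
  have lt: "run_s n P < run_s n R"
  proof (rule ccontr)
    assume "\<not> ?thesis"
    then have "run_s n P = run_s n R" using assms(3) by simp
    then show False using assms(4) pR(3) by simp
  qed
  have sub: "P \<subseteq> R"
  proof
    fix v assume "v \<in> P"
    then obtain u where u: "run_s n P \<le> u" "u \<le> run_s n P + rl n P" "u mod n = v"
      using mem_lift[OF assms(1)] by blast
    have "(u + n) mod n \<in> R" using lift_in[OF assms(2), of "u + n"] u assms(4) pR(2) by simp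
    then show "v \<in> R" using u(3) by simp
  qed
  have c1: "cdist n (run_s n R) (run_s n P) = run_s n P + n - run_s n R"
    using cdist_eq[OF pR(2) pP(2)] lt by simp
  have h1: "run_s n R \<le> run_s n P + rl n P + n" using pR(2) by simp
  have h2: "run_s n P + rl n P + n < run_s n R + n" using assms(4) pR(3) pR(1) by simp
  have "cdist n (run_s n R mod n) ((run_s n P + rl n P + n) mod n) = run_s n P + rl n P + n - run_s n R"
    by (rule cdist_mod[OF n0 h1 h2])
  then have c2: "cdist n (run_s n R) (run_t n P) = run_s n P + rl n P + n - run_s n R"
    using pP(5) pR(2) by simp
  have c3: "cdist n (run_s n R) (run_t n R) = rl n R" unfolding rl_def ..
  show ?thesis unfolding strictly_contained_def using sub c1 c2 c3 lt assms(4) pR(2) by simp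
qed


lemma L1:
  assumes "is_run n P" "is_run n Q" "is_run n R" "lex_less n P Q" "lex_less n Q R"
    "\<not> strictly_contained n R Q"
    "run_s n Q \<le> u" "u \<le> run_s n Q + rl n Q" "u mod n \<notin> P" "u mod n \<notin> R"
  shows "run_s n P + rl n P < u \<and> u < run_s n R"
proof
  have "run_s n P \<le> run_s n Q" "run_s n Q \<le> run_s n R" using assms(4,5) lex_iff by auto
  show "run_s n P + rl n P < u"
  proof (rule ccontr)
    assume "\<not> ?thesis"
    then have "u mod n \<in> P" using lift_in[OF assms(1), of u] assms(7) \<open>run_s n P \<le> run_s n Q\<close> by simp
    then show False using assms(9) by simp
  qed
  show "u < run_s n R"
  proof (rule ccontr)
    assume a: "\<not> ?thesis"
    have "\<not> u \<le> run_s n R + rl n R"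
    proof
      assume "u \<le> run_s n R + rl n R"
      then have "u mod n \<in> R" using lift_in[OF assms(3), of u] a by simp
      then show False using assms(10) by simp
    qed
    then have b: "run_s n R + rl n R < run_s n Q + rl n Q" using assms(8) by simp
    show False
    proof (cases "run_s n Q = run_s n R")
      case True
      then have "rl n Q < rl n R" using assms(5) lex_iff by auto
      then show False using b True by simp
    next
      case False
      then have "run_s n Q < run_s n R" using \<open>run_s n Q \<le> run_s n R\<close> by simp
      then show False using SC1[OF assms(2,3) _ b] assms(6) by simp
    qed
  qed
qed

lemma mod_sub_n: "(n::nat) \<le> u \<Longrightarrow> (u - n) mod n = u mod n"
  using le_mod_geq[of n u] by simp

lemma L2:
  assumes "is_run n P" "is_run n Q" "is_run n R" "lex_less n P Q" "lex_less n Q R"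
    "\<not> strictly_contained n P R"
    "run_s n R \<le> u" "u \<le> run_s n R + rl n R" "u mod n \<notin> P" "u mod n \<notin> Q"
  shows "run_s n Q + rl n Q < u \<and> u < run_s n P + n"
proof
  have o: "run_s n P \<le> run_s n Q" "run_s n Q \<le> run_s n R" using assms(4,5) lex_iff by auto
  show "run_s n Q + rl n Q < u"
  proof (rule ccontr)
    assume "\<not> ?thesis"
    then have "u mod n \<in> Q" using lift_in[OF assms(2), of u] assms(7) o by simp
    then show False using assms(10) by simp
  qed
  show "u < run_s n P + n"
  proof (rule ccontr)
    assume "\<not> ?thesis"
    then have a: "run_s n P + n \<le> u" by simp
    then have a1: "run_s n P \<le> u - n" "n \<le> u" by arith+
    have "\<not> u - n \<le> run_s n P + rl n P"
    proof
      assume "u - n \<le> run_s n P + rl n P"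
      then have "(u - n) mod n \<in> P" using lift_in[OF assms(1) a1(1)] by blast
      then have "u mod n \<in> P" unfolding mod_sub_n[OF a1(2)] .
      then show False using assms(9) by blast
    qed
    then have b: "run_s n P + rl n P + n < run_s n R + rl n R" using assms(8) a by arith
    have "run_s n P \<le> run_s n R" using o by (rule le_trans)
    then show False using SC2[OF assms(1,3) _ b] assms(6) by blast
  qed
qed

lemma L3:
  assumes "is_run n P" "is_run n Q" "is_run n R" "lex_less n P Q" "lex_less n Q R"
    "\<not> strictly_contained n Q P"
    "run_s n P \<le> u" "u \<le> run_s n P + rl n P" "u mod n \<notin> Q" "u mod n \<notin> R"
  shows "u < run_s n Q \<and> run_s n R + rl n R < u + n"
proof
  have o: "run_s n P \<le> run_s n Q" "run_s n Q \<le> run_s n R" using assms(4,5) lex_iff by auto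
  show "u < run_s n Q"
  proof (rule ccontr)
    assume a: "\<not> ?thesis"
    have "\<not> u \<le> run_s n Q + rl n Q"
    proof
      assume "u \<le> run_s n Q + rl n Q"
      then have "u mod n \<in> Q" using lift_in[OF assms(2), of u] a by simp
      then show False using assms(9) by simp
    qed
    then have b: "run_s n Q + rl n Q < run_s n P + rl n P" using assms(8) by simp
    show False
    proof (cases "run_s n P = run_s n Q")
      case True
      then have "rl n P < rl n Q" using assms(4) lex_iff by auto
      then show False using b True by simp
    next
      case False
      then have "run_s n P < run_s n Q" using o by simp
      then show False using SC1[OF assms(1,2) _ b] assms(6) by simp
    qed
  qed
  show "run_s n R + rl n R < u + n"
  proof (rule ccontr)
    assume a: "\<not> ?thesis"
    have "run_s n R \<le> u + n" using run_props(2)[OF assms(3)] by simp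
    then have "(u + n) mod n \<in> R" using lift_in[OF assms(3), of "u + n"] a by simp
    then show False using assms(10) by simp
  qed
qed

lemma W:
  assumes "0 < n" "u1 < u2" "u2 < u3" "u3 < u4" "u4 < u1 + n"
  shows "in_cyclic_order n (u1 mod n) (u2 mod n) (u3 mod n) (u4 mod n)"
proof -
  have c2: "cdist n (u1 mod n) (u2 mod n) = u2 - u1" using cdist_mod[OF assms(1), of u1 u2] assms by simp
  have c3: "cdist n (u1 mod n) (u3 mod n) = u3 - u1" using cdist_mod[OF assms(1), of u1 u3] assms by simp
  have c4: "cdist n (u1 mod n) (u4 mod n) = u4 - u1" using cdist_mod[OF assms(1), of u1 u4] assms by simp
  have "u2 - u1 < u3 - u1" "u3 - u1 < u4 - u1" "0 < u2 - u1" using assms by arith+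
  then show ?thesis unfolding in_cyclic_order_def c2 c3 c4 using assms(1) by simp
qed


lemma lex_trans: "lex_less n A B \<Longrightarrow> lex_less n B C \<Longrightarrow> lex_less n A C"
  unfolding lex_iff by auto

lemma transfer:
  assumes runs: "\<forall>R\<in>H. is_run n R" and scf: "strict_containment_free n H"
    and ax: "\<not> axax_pair n K1 K2"
    and mem: "A1 \<in> H" "A2 \<in> H" "X1 \<in> H" "X2 \<in> H"
    and a1: "A1 \<inter> K1 \<noteq> {}" "A1 \<inter> K2 = {}"
    and a2: "A2 \<inter> K1 \<noteq> {}" "A2 \<inter> K2 = {}"
    and x: "X1 \<inter> K2 \<noteq> {}" "X2 \<inter> K2 \<noteq> {}"
    and o: "lex_less n A1 X1" "lex_less n X1 A2" "lex_less n X2 A1 \<or> lex_less n A2 X2"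
  shows False
proof -
  have rA1: "is_run n A1" and rA2: "is_run n A2" and rX1: "is_run n X1" and rX2: "is_run n X2"
    using runs mem by auto
  have nsc: "\<And>R R'. R \<in> H \<Longrightarrow> R' \<in> H \<Longrightarrow> \<not> strictly_contained n R R'"
    using scf unfolding strict_containment_free_def by blast
  have n0: "0 < n" using run_props(1)[OF rA1] by simp
  obtain y1 where y1: "y1 \<in> A1" "y1 \<in> K1" using a1 by blast
  obtain y3 where y3: "y3 \<in> A2" "y3 \<in> K1" using a2 by blast
  obtain z1 where z1: "z1 \<in> X1" "z1 \<in> K2" using x by blast
  obtain z2 where z2: "z2 \<in> X2" "z2 \<in> K2" using x by blast
  have y1n: "y1 \<notin> K2" using y1 a1 by blast
  have y3n: "y3 \<notin> K2" using y3 a2 by blast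
  have z1n: "z1 \<notin> A1" "z1 \<notin> A2" using z1 a1 a2 by blast+
  have z2n: "z2 \<notin> A1" "z2 \<notin> A2" using z2 a1 a2 by blast+
  obtain u1 where u1: "run_s n A1 \<le> u1" "u1 \<le> run_s n A1 + rl n A1" "u1 mod n = y1"
    using mem_lift[OF rA1 y1(1)] by blast
  obtain u3 where u3: "run_s n A2 \<le> u3" "u3 \<le> run_s n A2 + rl n A2" "u3 mod n = y3"
    using mem_lift[OF rA2 y3(1)] by blast
  obtain v1 where v1: "run_s n X1 \<le> v1" "v1 \<le> run_s n X1 + rl n X1" "v1 mod n = z1"
    using mem_lift[OF rX1 z1(1)] by blast
  obtain v2 where v2: "run_s n X2 \<le> v2" "v2 \<le> run_s n X2 + rl n X2" "v2 mod n = z2"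
    using mem_lift[OF rX2 z2(1)] by blast
  have oA: "lex_less n A1 A2" using lex_trans o(1,2) by blast
  have b1: "run_s n A1 + rl n A1 < v1 \<and> v1 < run_s n A2"
    using L1[OF rA1 rX1 rA2 o(1) o(2) nsc[OF mem(2) mem(3)] v1(1) v1(2)] v1(3) z1n by simp
  from o(3) show False
  proof
    assume o3: "lex_less n A2 X2"
    have b2: "run_s n A2 + rl n A2 < v2 \<and> v2 < run_s n A1 + n"
      using L2[OF rA1 rA2 rX2 oA o3 nsc[OF mem(1) mem(4)] v2(1) v2(2)] v2(3) z2n by simp
    have "in_cyclic_order n (u1 mod n) (v1 mod n) (u3 mod n) (v2 mod n)"
      by (rule W[OF n0]) (use u1 u3 b1 b2 in arith)+
    then have "axax_pair n K1 K2" unfolding axax_pair_def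
      using u1(3) v1(3) u3(3) v2(3) y1 y1n y3 y3n z1 z2 by blast
    then show False using ax by simp
  next
    assume o3: "lex_less n X2 A1"
    have b2: "v2 < run_s n A1 \<and> run_s n A2 + rl n A2 < v2 + n"
      using L3[OF rX2 rA1 rA2 o3 oA nsc[OF mem(1) mem(4)] v2(1) v2(2)] v2(3) z2n by simp
    have "in_cyclic_order n (u1 mod n) (v1 mod n) (u3 mod n) ((v2 + n) mod n)"
      by (rule W[OF n0]) (use u1 u3 b1 b2 in arith)+
    then have "axax_pair n K1 K2" unfolding axax_pair_def
      using u1(3) v1(3) u3(3) v2(3) y1 y1n y3 y3n z1 z2 by auto
    then show False using ax by simp
  qed
qed

lemma sucmod_add: "(Suc i mod m + k) mod m = (i + Suc k) mod (m::nat)"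
proof -
  have "(Suc i mod m + k) mod m = (Suc i + k) mod m" by (rule mod_add_left_eq)
  moreover have "Suc i + k = i + Suc k" by simp
  ultimately show ?thesis by simp
qed

lemma add_cdist_mod2: "i < n \<Longrightarrow> j < n \<Longrightarrow> (i + cdist n i j) mod n = j"
proof (cases "i \<le> j")
  case True
  assume "i < n" "j < n"
  then show ?thesis using True by (simp add: cdist_eq)
next
  case False
  assume a: "i < n" "j < n"
  then have "i + cdist n i j = j + n" using False by (simp add: cdist_eq)
  then show ?thesis using a by simp
qed

lemma goodZ:
  assumes m0: "0 < m" and sub: "\<forall>S\<in>G. S \<subseteq> {0..<m}"
    and ax: "\<forall>S\<in>G. \<forall>T\<in>G. \<not> axax_pair m S T"
  shows "\<exists>i<m. \<forall>S\<in>G. i \<in> S \<longrightarrow> S = {i} \<or> Suc i mod m \<in> S \<or> (i + m - 1) mod m \<in> S"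
proof (rule ccontr)
  assume "\<not> ?thesis"
  then have iso: "\<And>i. i < m \<Longrightarrow> \<exists>S\<in>G. i \<in> S \<and> S \<noteq> {i} \<and> Suc i mod m \<notin> S \<and> (i + m - 1) mod m \<notin> S"
    by blast
  have exd: "\<exists>d. 0 < d \<and> d < m \<and> (i + d) mod m \<in> S" if h: "S \<in> G" "i < m" "i \<in> S" "S \<noteq> {i}" for S i
  proof -
    obtain w where w: "w \<in> S" "w \<noteq> i" using h by blast
    have "S \<subseteq> {0..<m}" using sub h(1) by blast
    then have wm: "w < m" using w(1) by auto
    have "cdist m i w \<noteq> 0" using cdist_inj[OF h(2) h(2) wm] cdist_self[of m i] w(2) by metis
    then show ?thesis using add_cdist_mod2[OF h(2) wm] cdist_lt[OF h(2) wm] w(1) by (intro exI[of _ "cdist m i w"]) simp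
  qed
  define Pd where "Pd d = (\<exists>S\<in>G. \<exists>i<m. i \<in> S \<and> S \<noteq> {i} \<and> Suc i mod m \<notin> S \<and> (i + m - 1) mod m \<notin> S
      \<and> 0 < d \<and> d < m \<and> (i + d) mod m \<in> S)" for d
  obtain S0 where S0: "S0 \<in> G" "0 \<in> S0" "S0 \<noteq> {0}" "Suc 0 mod m \<notin> S0" "(0 + m - 1) mod m \<notin> S0"
    using iso[OF m0] by auto
  have m2: "2 \<le> m"
  proof (rule ccontr)
    assume "\<not> 2 \<le> m"
    then have "m = 1" using m0 by simp
    then show False using S0 by simp
  qed
  obtain dd where "0 < dd \<and> dd < m \<and> (0 + dd) mod m \<in> S0" using exd[OF S0(1) m0 S0(2) S0(3)] by blast
  then have "Pd dd" unfolding Pd_def using S0 m0 by blast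
  define d0 where "d0 = (LEAST d. Pd d)"
  have "Pd d0" unfolding d0_def by (rule LeastI[of Pd dd]) fact
  then obtain S i where Si: "S \<in> G" "i < m" "i \<in> S" "S \<noteq> {i}" "Suc i mod m \<notin> S" "(i + m - 1) mod m \<notin> S"
      "0 < d0" "d0 < m" "(i + d0) mod m \<in> S" unfolding Pd_def by blast
  have mini: "(i + d) mod m \<notin> S" if "0 < d" "d < d0" for d
  proof
    assume "(i + d) mod m \<in> S"
    then have "Pd d" unfolding Pd_def using Si that by (intro bexI[of _ S]) auto
    then have "d0 \<le> d" unfolding d0_def by (rule Least_le)
    then show False using that by simp
  qed
  have d02: "2 \<le> d0"
  proof (rule ccontr)
    assume "\<not> 2 \<le> d0"
    then have "d0 = 1" using Si(7) by simp
    then show False using Si(5,9) by simp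
  qed
  define j where "j = Suc i mod m"
  have jm: "j < m" unfolding j_def using m0 by simp
  obtain T where T: "T \<in> G" "j \<in> T" "T \<noteq> {j}" "Suc j mod m \<notin> T" "(j + m - 1) mod m \<notin> T"
    using iso[OF jm] by blast
  have ji: "(j + m - 1) mod m = i"
  proof (cases "Suc i < m")
    case True
    then have "j = Suc i" unfolding j_def by simp
    then have "j + m - 1 = i + m" by simp
    then show ?thesis using Si(2) by simp
  next
    case False
    then have "Suc i = m" using Si(2) by simp
    then have "j = 0" unfolding j_def by simp
    then show ?thesis using \<open>Suc i = m\<close> by simp
  qed
  have iT: "i \<notin> T" using T(5) ji by simp
  define d1 where "d1 = (LEAST d. 0 < d \<and> d < m \<and> (j + d) mod m \<in> T)"
  obtain ee where ee: "0 < ee \<and> ee < m \<and> (j + ee) mod m \<in> T" using exd[OF T(1) jm T(2) T(3)] by blast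
  have d1p: "0 < d1 \<and> d1 < m \<and> (j + d1) mod m \<in> T" unfolding d1_def by (rule LeastI[of _ ee]) (rule ee)
  have mini1: "(j + d) mod m \<notin> T" if "0 < d" "d < d1" for d
  proof
    assume "(j + d) mod m \<in> T"
    then have "d1 \<le> d" unfolding d1_def using that jm by (intro Least_le) (use \<open>d < d1\<close> d1p in simp)
    then show False using that by simp
  qed
  have "Pd d1" unfolding Pd_def using T jm d1p by blast
  then have d01: "d0 \<le> d1" unfolding d0_def by (rule Least_le)
  have d1m: "d1 \<noteq> m - 1"
  proof
    assume "d1 = m - 1"
    then have "(j + d1) mod m = (j + m - 1) mod m" using m0 by simp
    then show False using d1p ji iT by simp
  qed
  define w where "w = (i + d0) mod m"
  have wS: "w \<in> S" unfolding w_def by (rule Si(9))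
  have "w = (j + (d0 - 1)) mod m" unfolding w_def j_def using sucmod_add[of i m "d0 - 1"] d02 by simp
  then have wT: "w \<notin> T" using mini1[of "d0 - 1"] d02 d01 by simp
  define t where "t = (j + d1) mod m"
  have tT: "t \<in> T" unfolding t_def using d1p by simp
  have t2: "t = (i + (d1 + 1)) mod m" unfolding t_def j_def using sucmod_add[of i m d1] by simp
  have c1: "cdist m i j = 1" unfolding j_def using cdist_add[OF Si(2), of 1] m2 by simp
  have c2: "cdist m i w = d0" unfolding w_def using cdist_add[OF Si(2) Si(8)] .
  have "d1 + 1 < m" using d1m d1p by arith
  then have c3: "cdist m i t = d1 + 1" unfolding t2 using cdist_add[OF Si(2), of "d1 + 1"] by blast
  have "in_cyclic_order m i j w t"
    unfolding in_cyclic_order_def c1 c2 c3 using Si(2) jm d02 d01 m0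
    by (simp add: w_def t_def)
  then have "axax_pair m S T" unfolding axax_pair_def using Si(3) wS iT wT T(2) tT by blast
  then show False using ax Si(1) T(1) by blast
qed

definition slin :: "('a \<Rightarrow> 'a \<Rightarrow> bool) \<Rightarrow> 'a set \<Rightarrow> bool" where
  "slin lt V \<longleftrightarrow> (\<forall>x\<in>V. \<not> lt x x) \<and> (\<forall>x\<in>V. \<forall>y\<in>V. \<forall>z\<in>V. lt x y \<longrightarrow> lt y z \<longrightarrow> lt x z)
     \<and> (\<forall>x\<in>V. \<forall>y\<in>V. x \<noteq> y \<longrightarrow> lt x y \<or> lt y x)"

definition cyc_edges :: "('a \<Rightarrow> 'a \<Rightarrow> bool) \<Rightarrow> 'a set \<Rightarrow> 'a set set" where
  "cyc_edges lt V = {{A, B} | A B. A \<in> V \<and> B \<in> V \<and> lt A B \<and>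
      ((\<not> (\<exists>X\<in>V. lt A X \<and> lt X B)) \<or> (\<forall>X\<in>V. \<not> lt X A \<and> \<not> lt B X))}"

definition crossing :: "('a \<Rightarrow> 'a \<Rightarrow> bool) \<Rightarrow> 'a set \<Rightarrow> 'a set \<Rightarrow> bool" where
  "crossing lt e f \<longleftrightarrow> (\<exists>A B C D. e = {A, B} \<and> f = {C, D} \<and> lt A C \<and> lt C B \<and> lt B D)"

definition linax :: "('a \<Rightarrow> 'a \<Rightarrow> bool) \<Rightarrow> 'a set set \<Rightarrow> bool" where
  "linax lt F \<longleftrightarrow> (\<forall>S\<in>F. \<forall>T\<in>F. \<not> (\<exists>a1\<in>S-T. \<exists>a2\<in>S-T. \<exists>x1\<in>T. \<exists>x2\<in>T.
      lt a1 x1 \<and> lt x1 a2 \<and> (lt x2 a1 \<or> lt a2 x2)))"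

definition rk :: "('a \<Rightarrow> 'a \<Rightarrow> bool) \<Rightarrow> 'a set \<Rightarrow> 'a \<Rightarrow> nat" where
  "rk lt V x = card {y\<in>V. lt y x}"

lemma slin_sub: "slin lt V \<Longrightarrow> W \<subseteq> V \<Longrightarrow> slin lt W"
  unfolding slin_def by blast

lemma slin_irr: "slin lt V \<Longrightarrow> x \<in> V \<Longrightarrow> \<not> lt x x" unfolding slin_def by blast
lemma slin_trans: "slin lt V \<Longrightarrow> x \<in> V \<Longrightarrow> y \<in> V \<Longrightarrow> z \<in> V \<Longrightarrow> lt x y \<Longrightarrow> lt y z \<Longrightarrow> lt x z"
  unfolding slin_def by blast
lemma slin_total: "slin lt V \<Longrightarrow> x \<in> V \<Longrightarrow> y \<in> V \<Longrightarrow> x \<noteq> y \<Longrightarrow> lt x y \<or> lt y x"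
  unfolding slin_def by blast

lemma CYC:
  assumes sl: "slin lt V" and e: "e \<in> cyc_edges lt V" and C: "C \<in> V" and D: "D \<in> V"
  shows "\<not> crossing lt e {C, D} \<and> \<not> crossing lt {C, D} e"
proof -
  obtain A0 B0 where AB: "e = {A0, B0}" "A0 \<in> V" "B0 \<in> V" "lt A0 B0"
    "(\<not> (\<exists>X\<in>V. lt A0 X \<and> lt X B0)) \<or> (\<forall>X\<in>V. \<not> lt X A0 \<and> \<not> lt B0 X)"
    using e unfolding cyc_edges_def by blast
  have irr: "\<And>x. x \<in> V \<Longrightarrow> \<not> lt x x" and tr: "\<And>x y z. x \<in> V \<Longrightarrow> y \<in> V \<Longrightarrow> z \<in> V \<Longrightarrow> lt x y \<Longrightarrow> lt y z \<Longrightarrow> lt x z"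
    using sl unfolding slin_def by blast+
  have ori: "A = A0 \<and> B = B0" if "{A, B} = e" "lt A B" for A B
  proof -
    have "A = A0 \<and> B = B0 \<or> A = B0 \<and> B = A0" using that(1) AB(1) by (simp add: doubleton_eq_iff)
    then show ?thesis using that(2) AB(2-4) irr tr by blast
  qed
  have "\<not> crossing lt e {C, D}"
  proof
    assume "crossing lt e {C, D}"
    then obtain A B C' D' where h: "e = {A, B}" "{C, D} = {C', D'}" "lt A C'" "lt C' B" "lt B D'"
      unfolding crossing_def by blast
    have V': "C' \<in> V" "D' \<in> V" using h(2) C D by (auto simp: doubleton_eq_iff)
    have "A \<in> V" "B \<in> V" using h(1) AB(1-3) by auto
    then have "lt A B" using tr h(3,4) V' by blast
    then have "A = A0 \<and> B = B0" using ori h(1) by blast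
    then show False using AB(5) h V' by blast
  qed
  moreover have "\<not> crossing lt {C, D} e"
  proof
    assume "crossing lt {C, D} e"
    then obtain A B C' D' where h: "{C, D} = {A, B}" "e = {C', D'}" "lt A C'" "lt C' B" "lt B D'"
      unfolding crossing_def by blast
    have V': "A \<in> V" "B \<in> V" using h(1) C D by (auto simp: doubleton_eq_iff)
    have "C' \<in> V" "D' \<in> V" using h(2) AB(1-3) by auto
    then have "lt C' D'" using tr h(4,5) V' by blast
    then have "C' = A0 \<and> D' = B0" using ori h(2) by blast
    then show False using AB(5) h V' by blast
  qed
  ultimately show ?thesis by blast
qed

lemma CO:
  assumes "in_cyclic_order m p1 p2 p3 p4"
  shows "(p1 < p2 \<and> p2 < p3 \<and> p3 < p4) \<or> (p2 < p3 \<and> p3 < p4 \<and> p4 < p1) \<or>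
         (p3 < p4 \<and> p4 < p1 \<and> p1 < p2) \<or> (p4 < p1 \<and> p1 < p2 \<and> p2 < p3)"
proof -
  have b: "p1 < m" "p2 < m" "p3 < m" "p4 < m" "0 < cdist m p1 p2" "cdist m p1 p2 < cdist m p1 p3"
    "cdist m p1 p3 < cdist m p1 p4" using assms unfolding in_cyclic_order_def by auto
  show ?thesis using b cdist_eq[OF b(1) b(2)] cdist_eq[OF b(1) b(3)] cdist_eq[OF b(1) b(4)]
    by (simp split: if_splits; arith)
qed

lemma rk_mono:
  assumes "finite V" "slin lt V" "x \<in> V" "y \<in> V" "lt x y"
  shows "rk lt V x < rk lt V y"
proof -
  have "{z\<in>V. lt z x} \<subseteq> {z\<in>V. lt z y}"
    using slin_trans[OF assms(2) _ assms(3,4) _ assms(5)] by blast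
  moreover have "x \<in> {z\<in>V. lt z y}" "x \<notin> {z\<in>V. lt z x}" using assms(3,5) slin_irr[OF assms(2,3)] by auto
  ultimately have "{z\<in>V. lt z x} \<subset> {z\<in>V. lt z y}" by blast
  then show ?thesis unfolding rk_def using assms(1) by (simp add: psubset_card_mono)
qed

lemma rk_lt:
  assumes "finite V" "slin lt V" "x \<in> V"
  shows "rk lt V x < card V"
proof -
  have "{z\<in>V. lt z x} \<subset> V" using slin_irr[OF assms(2,3)] assms(3) by blast
  then show ?thesis unfolding rk_def using assms(1) by (simp add: psubset_card_mono)
qed

lemma rk_iff:
  assumes "finite V" "slin lt V" "x \<in> V" "y \<in> V"
  shows "lt x y \<longleftrightarrow> rk lt V x < rk lt V y"
proof
  assume "lt x y" then show "rk lt V x < rk lt V y" by (rule rk_mono[OF assms])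
next
  assume a: "rk lt V x < rk lt V y"
  show "lt x y"
  proof (rule ccontr)
    assume "\<not> lt x y"
    then have "x = y \<or> lt y x" using slin_total[OF assms(2-4)] by blast
    then show False
    proof
      assume "x = y" then show False using a by simp
    next
      assume "lt y x" then have "rk lt V y < rk lt V x" by (rule rk_mono[OF assms(1,2,4,3)])
      then show False using a by simp
    qed
  qed
qed

lemma rk_inj: assumes "finite V" "slin lt V" shows "inj_on (rk lt V) V"
proof (rule inj_onI)
  fix x y assume h: "x \<in> V" "y \<in> V" "rk lt V x = rk lt V y"
  show "x = y"
  proof (rule ccontr)
    assume "x \<noteq> y"
    then have "lt x y \<or> lt y x" using slin_total[OF assms(2) h(1,2)] by blast
    then show False using rk_mono[OF assms, of x y] rk_mono[OF assms, of y x] h by auto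
  qed
qed

lemma rk_image: assumes "finite V" "slin lt V" shows "rk lt V ` V = {0..<card V}"
proof -
  have sub: "rk lt V ` V \<subseteq> {0..<card V}" using rk_lt[OF assms] by auto
  have "card (rk lt V ` V) = card V" using card_image[OF rk_inj[OF assms]] .
  then show ?thesis using card_subset_eq[OF _ sub] by simp
qed

lemma ADJ:
  assumes fin: "finite V" and sl: "slin lt V" and xy: "x \<in> V" "y \<in> V" and m2: "2 \<le> card V"
    and r: "rk lt V y = Suc (rk lt V x) mod card V"
  shows "{x, y} \<in> cyc_edges lt V"
proof (cases "Suc (rk lt V x) < card V")
  case True
  then have ry: "rk lt V y = Suc (rk lt V x)" using r by simp
  have "lt x y" using rk_iff[OF fin sl xy] ry by simp
  moreover have "\<not> (\<exists>X\<in>V. lt x X \<and> lt X y)"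
  proof
    assume "\<exists>X\<in>V. lt x X \<and> lt X y"
    then obtain X where "X \<in> V" "lt x X" "lt X y" by blast
    then show False using rk_iff[OF fin sl xy(1), of X] rk_iff[OF fin sl _ xy(2), of X] ry by simp
  qed
  ultimately show ?thesis unfolding cyc_edges_def using xy by blast
next
  case False
  then have rx: "Suc (rk lt V x) = card V" using rk_lt[OF fin sl xy(1)] by simp
  then have ry: "rk lt V y = 0" using r by simp
  have "lt y x" using rk_iff[OF fin sl xy(2,1)] ry rx m2 by simp
  moreover have "\<forall>X\<in>V. \<not> lt X y \<and> \<not> lt x X"
  proof
    fix X assume X: "X \<in> V"
    show "\<not> lt X y \<and> \<not> lt x X"
      using rk_iff[OF fin sl X xy(2)] rk_iff[OF fin sl xy(1) X] ry rx rk_lt[OF fin sl X] by simp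
  qed
  ultimately have "{y, x} \<in> cyc_edges lt V" unfolding cyc_edges_def using xy by blast
  then show ?thesis by (simp add: insert_commute)
qed


lemma mod_pred_facts:
  assumes "i < m" "2 \<le> (m::nat)"
  shows "Suc ((i + m - 1) mod m) mod m = i" "(i + m - 1) mod m \<noteq> i" "Suc i mod m \<noteq> i"
proof -
  show "Suc ((i + m - 1) mod m) mod m = i" "(i + m - 1) mod m \<noteq> i"
  proof (atomize (full), cases "i = 0")
    case True
    then show "Suc ((i + m - 1) mod m) mod m = i \<and> (i + m - 1) mod m \<noteq> i" using assms by simp
  next
    case False
    then have e: "i + m - 1 = (i - 1) + m" by arith
    have "(i + m - 1) mod m = i - 1" unfolding e using assms(1) by simp
    then show "Suc ((i + m - 1) mod m) mod m = i \<and> (i + m - 1) mod m \<noteq> i" using assms False by simp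
  qed
  show "Suc i mod m \<noteq> i"
  proof (cases "Suc i < m")
    case True then show ?thesis by simp
  next
    case False then have "Suc i = m" using assms by simp
    then show ?thesis using assms by simp
  qed
qed

lemma GV:
  assumes fin: "finite V" and sl: "slin lt V" and ne: "V \<noteq> {}" and sub: "\<forall>S\<in>F. S \<subseteq> V"
    and ax: "linax lt F"
  shows "\<exists>v\<in>V. \<forall>S\<in>F. v \<in> S \<longrightarrow> S = {v} \<or> (\<exists>u\<in>S. u \<noteq> v \<and> {u, v} \<in> cyc_edges lt V)"
proof -
  define r where "r = rk lt V"
  define m where "m = card V"
  have m0: "0 < m" unfolding m_def using fin ne by (simp add: card_gt_0_iff)
  have img: "r ` V = {0..<m}" unfolding r_def m_def by (rule rk_image[OF fin sl])
  have inj: "inj_on r V" unfolding r_def by (rule rk_inj[OF fin sl])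
  have riff: "\<And>x y. x \<in> V \<Longrightarrow> y \<in> V \<Longrightarrow> lt x y \<longleftrightarrow> r x < r y" unfolding r_def by (rule rk_iff[OF fin sl])
  define G where "G = (\<lambda>S. r ` S) ` F"
  have Gsub: "\<forall>S\<in>G. S \<subseteq> {0..<m}" unfolding G_def using sub img by auto
  have Gax: "\<forall>S'\<in>G. \<forall>T'\<in>G. \<not> axax_pair m S' T'"
  proof (intro ballI notI)
    fix S' T' assume S'G: "S' \<in> G" and T'G: "T' \<in> G" and axp: "axax_pair m S' T'"
    obtain S where S: "S \<in> F" "S' = r ` S" using S'G unfolding G_def by blast
    obtain T where T: "T \<in> F" "T' = r ` T" using T'G unfolding G_def by blast
    have SV: "S \<subseteq> V" and TV: "T \<subseteq> V" using sub S T by auto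
    obtain a1 x1 a2 x2 where co: "in_cyclic_order m a1 x1 a2 x2" and
      a: "a1 \<in> S' - T'" "a2 \<in> S' - T'" and x: "x1 \<in> T'" "x2 \<in> T'"
      using axp unfolding axax_pair_def by blast
    obtain b1 where b1: "b1 \<in> S" "r b1 = a1" using a(1) S(2) by blast
    obtain b2 where b2: "b2 \<in> S" "r b2 = a2" using a(2) S(2) by blast
    obtain c1 where c1: "c1 \<in> T" "r c1 = x1" using x(1) T(2) by blast
    obtain c2 where c2: "c2 \<in> T" "r c2 = x2" using x(2) T(2) by blast
    have b1T: "b1 \<notin> T" using a(1) b1 T(2) by blast
    have b2T: "b2 \<notin> T" using a(2) b2 T(2) by blast
    have V: "b1 \<in> V" "b2 \<in> V" "c1 \<in> V" "c2 \<in> V" using b1 b2 c1 c2 SV TV by auto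
    have nl: "linax lt F" by (rule ax)
    have viol: "\<exists>a1\<in>S-T. \<exists>a2\<in>S-T. \<exists>x1\<in>T. \<exists>x2\<in>T. lt a1 x1 \<and> lt x1 a2 \<and> (lt x2 a1 \<or> lt a2 x2)"
    proof -
      from CO[OF co] show ?thesis
      proof (elim disjE conjE)
        assume "a1 < x1" "x1 < a2" "a2 < x2"
        have l0: "lt b1 c1" using riff[OF V(1) V(3)] b1(2) c1(2) \<open>a1 < x1\<close> by simp
        have l1: "lt c1 b2" using riff[OF V(3) V(2)] c1(2) b2(2) \<open>x1 < a2\<close> by simp
        have l2: "lt b2 c2" using riff[OF V(2) V(4)] b2(2) c2(2) \<open>a2 < x2\<close> by simp
        note ls = l0 l1 l2
        show ?thesis using ls b1 b2 c1 c2 b1T b2T by blast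
      next
        assume "x1 < a2" "a2 < x2" "x2 < a1"
        have l0: "lt b2 c2" using riff[OF V(2) V(4)] b2(2) c2(2) \<open>a2 < x2\<close> by simp
        have l1: "lt c2 b1" using riff[OF V(4) V(1)] c2(2) b1(2) \<open>x2 < a1\<close> by simp
        have l2: "lt c1 b2" using riff[OF V(3) V(2)] c1(2) b2(2) \<open>x1 < a2\<close> by simp
        note ls = l0 l1 l2
        show ?thesis using ls b1 b2 c1 c2 b1T b2T by blast
      next
        assume "a2 < x2" "x2 < a1" "a1 < x1"
        have l0: "lt b2 c2" using riff[OF V(2) V(4)] b2(2) c2(2) \<open>a2 < x2\<close> by simp
        have l1: "lt c2 b1" using riff[OF V(4) V(1)] c2(2) b1(2) \<open>x2 < a1\<close> by simp
        have l2: "lt b1 c1" using riff[OF V(1) V(3)] b1(2) c1(2) \<open>a1 < x1\<close> by simp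
        note ls = l0 l1 l2
        show ?thesis using ls b1 b2 c1 c2 b1T b2T by blast
      next
        assume "x2 < a1" "a1 < x1" "x1 < a2"
        have l0: "lt b1 c1" using riff[OF V(1) V(3)] b1(2) c1(2) \<open>a1 < x1\<close> by simp
        have l1: "lt c1 b2" using riff[OF V(3) V(2)] c1(2) b2(2) \<open>x1 < a2\<close> by simp
        have l2: "lt c2 b1" using riff[OF V(4) V(1)] c2(2) b1(2) \<open>x2 < a1\<close> by simp
        note ls = l0 l1 l2
        show ?thesis using ls b1 b2 c1 c2 b1T b2T by blast
      qed
    qed
    then show False using ax S(1) T(1) unfolding linax_def by blast
  qed
  obtain i where i: "i < m" "\<forall>S\<in>G. i \<in> S \<longrightarrow> S = {i} \<or> Suc i mod m \<in> S \<or> (i + m - 1) mod m \<in> S"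
    using goodZ[OF m0 Gsub Gax] by blast
  have "i \<in> r ` V" using img i(1) by simp
  then obtain v where v: "v \<in> V" "r v = i" by blast
  show ?thesis
  proof (intro bexI[of _ v] ballI impI)
    fix S assume SF: "S \<in> F" and vS: "v \<in> S"
    show "S = {v} \<or> (\<exists>u\<in>S. u \<noteq> v \<and> {u, v} \<in> cyc_edges lt V)"
    proof (cases "S = {v}")
      case True then show ?thesis by simp
    next
      case False
      then obtain w where w: "w \<in> S" "w \<noteq> v" using vS by blast
      have SV: "S \<subseteq> V" using sub SF by auto
      have "card {v, w} \<le> card V" using v(1) w SV fin by (intro card_mono) auto
      then have m2: "2 \<le> m" unfolding m_def using w(2) by simp
      have "r w \<noteq> i" using inj w v SV unfolding inj_on_def by blast
      then have "r ` S \<noteq> {i}" using w(1) by blast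
      moreover have "r ` S \<in> G" unfolding G_def using SF by blast
      moreover have "i \<in> r ` S" using vS v by blast
      ultimately have "Suc i mod m \<in> r ` S \<or> (i + m - 1) mod m \<in> r ` S" using i(2) by blast
      then show ?thesis
      proof
        assume "Suc i mod m \<in> r ` S"
        then obtain u where u: "u \<in> S" "r u = Suc i mod m" by auto
        have "{v, u} \<in> cyc_edges lt V"
          using ADJ[OF fin sl v(1) _ ] u SV m2 v(2) unfolding r_def m_def by auto
        moreover have "u \<noteq> v" using u v(2) mod_pred_facts[OF i(1) m2] by auto
        ultimately show ?thesis using u(1) by (auto simp: insert_commute)
      next
        assume "(i + m - 1) mod m \<in> r ` S"
        then obtain u where u: "u \<in> S" "r u = (i + m - 1) mod m" by auto
        have "r v = Suc (r u) mod m" using u(2) v(2) mod_pred_facts[OF i(1) m2] by simp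
        then have "{u, v} \<in> cyc_edges lt V"
          using ADJ[OF fin sl _ v(1)] u SV m2 unfolding r_def m_def by auto
        moreover have "u \<noteq> v" using u v(2) mod_pred_facts[OF i(1) m2] by auto
        ultimately show ?thesis using u(1) by auto
      qed
    qed
  qed (rule v(1))
qed

lemma rtc_mono:
  assumes "(\<lambda>x y. x \<in> S' \<and> y \<in> S' \<and> {x, y} \<in> E')\<^sup>*\<^sup>* a b" "S' \<subseteq> S" "E' \<subseteq> E"
  shows "(\<lambda>x y. x \<in> S \<and> y \<in> S \<and> {x, y} \<in> E)\<^sup>*\<^sup>* a b"
  using assms(1)
proof (induction rule: rtranclp_induct)
  case base then show ?case by simp
next
  case (step y z)
  then have "(\<lambda>x y. x \<in> S \<and> y \<in> S \<and> {x, y} \<in> E) y z" using assms(2,3) by blast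
  then show ?case by (rule rtranclp.rtrancl_into_rtrancl[OF step(3)])
qed

lemma GL:
  "finite V \<Longrightarrow> slin lt V \<Longrightarrow> \<forall>S\<in>F. S \<subseteq> V \<Longrightarrow> linax lt F \<Longrightarrow>
   \<exists>E. simple_graph_on V E \<and> cyc_edges lt V \<subseteq> E \<and> (\<forall>e\<in>E. \<forall>f\<in>E. \<not> crossing lt e f)
      \<and> (\<forall>S\<in>F. induces_connected E S)"
proof (induction "card V" arbitrary: V F rule: less_induct)
  case less
  note fin = less.prems(1) and sl = less.prems(2) and sub = less.prems(3) and ax = less.prems(4)
  show ?case
  proof (cases "V = {}")
    case True
    have "simple_graph_on V {}" unfolding simple_graph_on_def by simp
    moreover have "cyc_edges lt V \<subseteq> {}" unfolding cyc_edges_def True by blast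
    moreover have "\<forall>S\<in>F. induces_connected {} S" using sub True unfolding induces_connected_def by auto
    ultimately show ?thesis by blast
  next
    case False
    obtain v where v: "v \<in> V" "\<forall>S\<in>F. v \<in> S \<longrightarrow> S = {v} \<or> (\<exists>u\<in>S. u \<noteq> v \<and> {u, v} \<in> cyc_edges lt V)"
      using GV[OF fin sl False sub ax] by blast
    define V' where "V' = V - {v}"
    define F' where "F' = (\<lambda>S. S - {v}) ` F"
    have cV': "card V' < card V" unfolding V'_def using fin v(1) by (rule card_Diff1_less)
    have fV': "finite V'" unfolding V'_def using fin by simp
    have sV': "slin lt V'" unfolding V'_def using sl by (rule slin_sub) blast
    have subF': "\<forall>S\<in>F'. S \<subseteq> V'" unfolding F'_def V'_def using sub by blast
    have axF': "linax lt F'" unfolding linax_def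
    proof (intro ballI notI)
      fix S' T' assume S': "S' \<in> F'" and T': "T' \<in> F'" and
        h: "\<exists>a1\<in>S'-T'. \<exists>a2\<in>S'-T'. \<exists>x1\<in>T'. \<exists>x2\<in>T'. lt a1 x1 \<and> lt x1 a2 \<and> (lt x2 a1 \<or> lt a2 x2)"
      obtain S where S: "S \<in> F" "S' = S - {v}" using S' unfolding F'_def by blast
      obtain T where T: "T \<in> F" "T' = T - {v}" using T' unfolding F'_def by blast
      have "S' - T' \<subseteq> S - T" "T' \<subseteq> T" using S(2) T(2) by blast+
      then have "\<exists>a1\<in>S-T. \<exists>a2\<in>S-T. \<exists>x1\<in>T. \<exists>x2\<in>T. lt a1 x1 \<and> lt x1 a2 \<and> (lt x2 a1 \<or> lt a2 x2)"
        using h by blast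
      then show False using ax S(1) T(1) unfolding linax_def by blast
    qed
    obtain E' where E': "simple_graph_on V' E'" "cyc_edges lt V' \<subseteq> E'"
      "\<forall>e\<in>E'. \<forall>f\<in>E'. \<not> crossing lt e f" "\<forall>S\<in>F'. induces_connected E' S"
      using less.hyps[OF cV' fV' sV' subF' axF'] by blast
    define E where "E = E' \<union> cyc_edges lt V"
    have irr: "\<And>x. x \<in> V \<Longrightarrow> \<not> lt x x" using sl by (rule slin_irr)
    have sg: "simple_graph_on V E"
      unfolding simple_graph_on_def
    proof
      fix e assume "e \<in> E"
      then show "\<exists>u w. u \<in> V \<and> w \<in> V \<and> u \<noteq> w \<and> e = {u, w}"
      proof (cases "e \<in> E'")
        case True
        then show ?thesis using E'(1) unfolding simple_graph_on_def V'_def by blast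
      next
        case False
        then have "e \<in> cyc_edges lt V" using \<open>e \<in> E\<close> unfolding E_def by blast
        then obtain A B where "e = {A, B}" "A \<in> V" "B \<in> V" "lt A B" unfolding cyc_edges_def by blast
        then show ?thesis using irr by blast
      qed
    qed
    have nc: "\<forall>e\<in>E. \<forall>f\<in>E. \<not> crossing lt e f"
    proof (intro ballI)
      fix e f assume e: "e \<in> E" and f: "f \<in> E"
      obtain A B where eAB: "e = {A, B}" "A \<in> V" "B \<in> V" using sg e unfolding simple_graph_on_def by blast
      obtain C D where fCD: "f = {C, D}" "C \<in> V" "D \<in> V" using sg f unfolding simple_graph_on_def by blast
      show "\<not> crossing lt e f"
      proof (cases "e \<in> cyc_edges lt V")
        case True
        then show ?thesis using CYC[OF sl True fCD(2,3)] fCD(1) by simp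
      next
        case False
        note eF = False
        show ?thesis
        proof (cases "f \<in> cyc_edges lt V")
          case True
          then show ?thesis using CYC[OF sl True eAB(2,3)] eAB(1) by simp
        next
          case False
          then have "e \<in> E'" "f \<in> E'" using e f eF unfolding E_def by blast+
          then show ?thesis using E'(3) by blast
        qed
      qed
    qed
    have conn: "\<forall>S\<in>F. induces_connected E S"
    proof
      fix S assume SF: "S \<in> F"
      have S'F: "S - {v} \<in> F'" unfolding F'_def using SF by blast
      have c': "\<forall>a\<in>S - {v}. \<forall>b\<in>S - {v}. (\<lambda>x y. x \<in> S - {v} \<and> y \<in> S - {v} \<and> {x, y} \<in> E')\<^sup>*\<^sup>* a b"
        using E'(4) S'F unfolding induces_connected_def by blast
      have c: "(\<lambda>x y. x \<in> S \<and> y \<in> S \<and> {x, y} \<in> E)\<^sup>*\<^sup>* a b" if "a \<in> S - {v}" "b \<in> S - {v}" for a b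
        using rtc_mono[OF c'[rule_format, OF that]] unfolding E_def by blast
      show "induces_connected E S"
      proof (cases "v \<in> S")
        case False
        then show ?thesis unfolding induces_connected_def using c by blast
      next
        case True
        show ?thesis
        proof (cases "S = {v}")
          case True
          then show ?thesis unfolding induces_connected_def by simp
        next
          case False
          then obtain u where u: "u \<in> S" "u \<noteq> v" "{u, v} \<in> cyc_edges lt V" using v(2) SF \<open>v \<in> S\<close> by blast
          let ?R = "\<lambda>x y. x \<in> S \<and> y \<in> S \<and> {x, y} \<in> E"
          have Ruv: "?R u v" using u \<open>v \<in> S\<close> unfolding E_def by blast
          have Rvu: "?R v u" using u \<open>v \<in> S\<close> unfolding E_def by (auto simp: insert_commute)
          have toU: "?R\<^sup>*\<^sup>* a u" if "a \<in> S" for a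
          proof (cases "a = v")
            case True then show ?thesis using Rvu by auto
          next
            case False then show ?thesis using c[of a u] that u by blast
          qed
          have fromU: "?R\<^sup>*\<^sup>* u b" if "b \<in> S" for b
          proof (cases "b = v")
            case True then show ?thesis using Ruv by auto
          next
            case False then show ?thesis using c[of u b] that u by blast
          qed
          show ?thesis unfolding induces_connected_def
            using toU fromU by (meson rtranclp_trans)
        qed
      qed
    qed
    have "cyc_edges lt V \<subseteq> E" unfolding E_def by blast
    then show ?thesis using sg nc conn by blast
  qed
qed

lemma lex_cyc: "lex_cycle_edges n H = cyc_edges (lex_less n) H"
  unfolding lex_cycle_edges_def cyc_edges_def ..

lemma lex_cross: "edges_cross n e f = crossing (lex_less n) e f"
  unfolding edges_cross_def crossing_def ..

lemma slin_lex:
  assumes "\<forall>R\<in>H. is_run n R"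
  shows "slin (lex_less n) H"
  unfolding slin_def
proof (intro conjI ballI impI)
  fix x assume "x \<in> H" show "\<not> lex_less n x x" unfolding lex_less_def by simp
next
  fix x y z assume "lex_less n x y" "lex_less n y z" then show "lex_less n x z" by (rule lex_trans)
next
  fix x y assume xy: "x \<in> H" "y \<in> H" "x \<noteq> y"
  show "lex_less n x y \<or> lex_less n y x"
  proof (rule ccontr)
    assume "\<not> ?thesis"
    then have "run_s n x = run_s n y" "rl n x = rl n y" unfolding lex_iff by auto
    then have "x = y" using run_props(4)[of n x] run_props(4)[of n y] assms xy(1,2) by metis
    then show False using xy(3) by simp
  qed
qed

theorem mainTheorem15:
  fixes n :: nat and \<H> :: "nat set set" and \<K> :: "nat set set"
  assumes "3 \<le> n"
    and "finite \<H>" and "3 \<le> card \<H>"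
    and "\<forall>R\<in>\<H>. is_run n R"
    and "strict_containment_free n \<H>"
    and "\<forall>K\<in>\<K>. K \<subseteq> {0..<n}"
    and "axax_free n \<H>" and "axax_free n \<K>"
  shows "\<exists>E :: nat set set set. simple_graph_on \<H> E
           \<and> lex_cycle_edges n \<H> \<subseteq> E
           \<and> (\<forall>e\<in>E. \<forall>f\<in>E. \<not> edges_cross n e f)
           \<and> (\<forall>K\<in>\<K>. induces_connected E {H\<in>\<H>. H \<inter> K \<noteq> {}})"
proof -
  define F where "F = (\<lambda>K. {H\<in>\<H>. H \<inter> K \<noteq> {}}) ` \<K>"
  have sl: "slin (lex_less n) \<H>" by (rule slin_lex[OF assms(4)])
  have sub: "\<forall>S\<in>F. S \<subseteq> \<H>" unfolding F_def by blast
  have ax: "linax (lex_less n) F" unfolding linax_def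
  proof (intro ballI notI)
    fix S T assume S: "S \<in> F" and T: "T \<in> F" and
      h: "\<exists>a1\<in>S-T. \<exists>a2\<in>S-T. \<exists>x1\<in>T. \<exists>x2\<in>T. lex_less n a1 x1 \<and> lex_less n x1 a2
            \<and> (lex_less n x2 a1 \<or> lex_less n a2 x2)"
    obtain K1 where K1: "K1 \<in> \<K>" "S = {H\<in>\<H>. H \<inter> K1 \<noteq> {}}" using S unfolding F_def by blast
    obtain K2 where K2: "K2 \<in> \<K>" "T = {H\<in>\<H>. H \<inter> K2 \<noteq> {}}" using T unfolding F_def by blast
    obtain A1 A2 X1 X2 where w: "A1 \<in> S - T" "A2 \<in> S - T" "X1 \<in> T" "X2 \<in> T"
      "lex_less n A1 X1" "lex_less n X1 A2" "lex_less n X2 A1 \<or> lex_less n A2 X2"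
      using h by blast
    have nax: "\<not> axax_pair n K1 K2" using assms(8) K1(1) K2(1) unfolding axax_free_def by blast
    show False
      by (rule transfer[OF assms(4) assms(5) nax, of A1 A2 X1 X2]) (use w K1 K2 in auto)
  qed
  obtain E where E: "simple_graph_on \<H> E" "cyc_edges (lex_less n) \<H> \<subseteq> E"
    "\<forall>e\<in>E. \<forall>f\<in>E. \<not> crossing (lex_less n) e f" "\<forall>S\<in>F. induces_connected E S"
    using GL[OF assms(2) sl sub ax] by blast
  have "\<forall>K\<in>\<K>. induces_connected E {H\<in>\<H>. H \<inter> K \<noteq> {}}" using E(4) unfolding F_def by blast
  then show ?thesis using E(1-3) unfolding lex_cyc lex_cross by blast
qed

end
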